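(* For every $p\in[1,+\infty)$ and every $z\in X$, the operator $C^1_b(X)\to L^p(X,\nu)$, $\varphi\mapsto\langle R\nabla\varphi,z\rangle$, is closable in $L^p(X,\nu)$. Consequently the operator $R\nabla$ with domain $C^1_b(X)$, from $L^p(X,\nu)$ to $L^p(X,\nu;X)$, is closable in $L^p(X,\nu)$.
   Context: $X$ is a separable real Hilbert space with inner product $\langle\cdot,\cdot\rangle$, $\nu$ a Borel probability measure on $X$, $R\in\mathcal L(X)$. $C^1_b(X)$ is the space of bounded, continuously Fréchet differentiable $\varphi:X\to\mathbb R$ with bounded gradient $\nabla\varphi$. Standing assumption: for every $z\in X$ there exists $v_z\in\bigcap_{p>1}L^p(X,\nu)$ with $\int_X\langle R\nabla\varphi,z\rangle\,d\nu=\int_Xv_z\varphi\,d\nu$ for all $\varphi\in C^1_b(X)$. *)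

theory Defs
  imports "HOL-Probability.Probability"
begin

definition grad :: "('a::real_inner \<Rightarrow> real) \<Rightarrow> 'a \<Rightarrow> 'a" where
  "grad f x = (SOME v. (f has_derivative (\<lambda>h. v \<bullet> h)) (at x))"

definition C1b :: "('a::real_inner \<Rightarrow> real) set" where
  "C1b = {f. bounded (range f)
             \<and> (\<forall>x. (f has_derivative (\<lambda>h. grad f x \<bullet> h)) (at x))
             \<and> continuous_on UNIV (grad f)
             \<and> bounded (range (grad f))}"

definition Lp_closable ::
  "'a measure \<Rightarrow> real \<Rightarrow> ('a \<Rightarrow> real) set \<Rightarrow> (('a \<Rightarrow> real) \<Rightarrow> 'a \<Rightarrow> 'b::{banach, second_countable_topology}) \<Rightarrow> bool" where
  "Lp_closable M p D T \<longleftrightarrow>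
     (\<forall>(\<phi>::nat \<Rightarrow> 'a \<Rightarrow> real) (g::'a \<Rightarrow> 'b).
        (\<forall>n. \<phi> n \<in> D)
        \<and> (\<lambda>n. \<integral>x. \<bar>\<phi> n x\<bar> powr p \<partial>M) \<longlonglongrightarrow> 0
        \<and> g \<in> borel_measurable M
        \<and> integrable M (\<lambda>x. norm (g x) powr p)
        \<and> (\<lambda>n. \<integral>x. norm (T (\<phi> n) x - g x) powr p \<partial>M) \<longlonglongrightarrow> 0
        \<longrightarrow> (AE x in M. g x = 0))"

end

theory Submission
  imports Defs "HOL-Real_Asymp.Real_Asymp"
begin
lemma lim_top: "(s::real) > c \<Longrightarrow> filterlim (\<lambda>k::nat. real k ^ 2 * (s - c) - real k) at_top sequentially"
  by real_asymp
lemma lim_bot: assumes "(s::real) \<le> c" shows "filterlim (\<lambda>k::nat. real k ^ 2 * (s - c) - real k) at_bot sequentially"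
proof (cases "s = c")
  case True then show ?thesis by simp real_asymp
next
  case False
  then have "s < c" using assms by simp
  then show ?thesis by real_asymp
qed

lemma grad_eqI:
  fixes f :: "'a::real_inner \<Rightarrow> real"
  assumes "(f has_derivative (\<lambda>h. v \<bullet> h)) (at x)"
  shows "grad f x = v"
proof -
  have ex: "\<exists>w. (f has_derivative (\<lambda>h. w \<bullet> h)) (at x)" using assms by blast
  have w: "(f has_derivative (\<lambda>h. grad f x \<bullet> h)) (at x)"
    unfolding grad_def using someI_ex[OF ex] .
  have "(\<lambda>h. grad f x \<bullet> h) = (\<lambda>h. v \<bullet> h)" using has_derivative_unique[OF w assms] .
  then have "grad f x \<bullet> (grad f x - v) = v \<bullet> (grad f x - v)" by metis
  then have "(grad f x - v) \<bullet> (grad f x - v) = 0" by (simp add: inner_diff_left)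
  then show ?thesis by simp
qed

lemma C1bI:
  fixes f :: "'a::real_inner \<Rightarrow> real"
  assumes "\<And>x. \<bar>f x\<bar> \<le> B" "\<And>x. (f has_derivative (\<lambda>h. G x \<bullet> h)) (at x)"
    "continuous_on UNIV G" "\<And>x. norm (G x) \<le> C"
  shows "f \<in> C1b" "grad f = G"
proof -
  show g: "grad f = G" using grad_eqI[OF assms(2)] by auto
  have "bounded (range f)" unfolding bounded_iff using assms(1) by auto
  moreover have "bounded (range G)" unfolding bounded_iff using assms(4) by auto
  ultimately show "f \<in> C1b" using assms g by (simp add: C1b_def)
qed

lemma C1bD:
  fixes f :: "'a::real_inner \<Rightarrow> real"
  assumes "f \<in> C1b"
  shows "\<exists>B. \<forall>x. \<bar>f x\<bar> \<le> B" "\<And>x. (f has_derivative (\<lambda>h. grad f x \<bullet> h)) (at x)"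
    "continuous_on UNIV (grad f)" "\<exists>C. \<forall>x. norm (grad f x) \<le> C"
    "continuous_on UNIV f"
proof -
  show "\<exists>B. \<forall>x. \<bar>f x\<bar> \<le> B" "\<And>x. (f has_derivative (\<lambda>h. grad f x \<bullet> h)) (at x)"
    "continuous_on UNIV (grad f)" "\<exists>C. \<forall>x. norm (grad f x) \<le> C"
    using assms by (auto simp: C1b_def bounded_iff)
  then show "continuous_on UNIV f"
    by (meson continuous_at_imp_continuous_on has_derivative_continuous)
qed

lemma C1b_const: "(\<lambda>x. c) \<in> C1b" "grad (\<lambda>x. c) = (\<lambda>x. 0)"
  by (rule C1bI[where B="\<bar>c\<bar>" and C=0]; auto intro!: derivative_eq_intros)+

lemma C1b_mult:
  fixes f g :: "'a::real_inner \<Rightarrow> real"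
  assumes "f \<in> C1b" "g \<in> C1b"
  shows "(\<lambda>x. f x * g x) \<in> C1b" "grad (\<lambda>x. f x * g x) = (\<lambda>x. f x *\<^sub>R grad g x + g x *\<^sub>R grad f x)"
proof -
  obtain B1 where B1: "\<And>x. \<bar>f x\<bar> \<le> B1" using C1bD(1)[OF assms(1)] by blast
  obtain B2 where B2: "\<And>x. \<bar>g x\<bar> \<le> B2" using C1bD(1)[OF assms(2)] by blast
  obtain C1 where C1: "\<And>x. norm (grad f x) \<le> C1" using C1bD(4)[OF assms(1)] by blast
  obtain C2 where C2: "\<And>x. norm (grad g x) \<le> C2" using C1bD(4)[OF assms(2)] by blast
  have d: "((\<lambda>x. f x * g x) has_derivative (\<lambda>h. (f x *\<^sub>R grad g x + g x *\<^sub>R grad f x) \<bullet> h)) (at x)" for x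
    using has_derivative_mult[OF C1bD(2)[OF assms(1)] C1bD(2)[OF assms(2)], of x]
    by (simp add: inner_add_left algebra_simps)
  have b: "\<bar>f x * g x\<bar> \<le> B1 * B2" for x
    by (simp add: abs_mult) (meson B1 B2 abs_ge_zero mult_mono order_trans)
  have c: "norm (f x *\<^sub>R grad g x + g x *\<^sub>R grad f x) \<le> B1 * C2 + B2 * C1" for x
  proof -
    have "norm (f x *\<^sub>R grad g x + g x *\<^sub>R grad f x) \<le> \<bar>f x\<bar> * norm (grad g x) + \<bar>g x\<bar> * norm (grad f x)"
      by (metis norm_scaleR norm_triangle_ineq)
    also have "\<dots> \<le> B1 * C2 + B2 * C1"
      by (intro add_mono mult_mono) (auto simp: B1 B2 C1 C2 intro: order_trans[OF abs_ge_zero B1] order_trans[OF abs_ge_zero B2])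
    finally show ?thesis .
  qed
  have cont: "continuous_on UNIV (\<lambda>x. f x *\<^sub>R grad g x + g x *\<^sub>R grad f x)"
    by (intro continuous_intros C1bD[OF assms(1)] C1bD[OF assms(2)])
  show "(\<lambda>x. f x * g x) \<in> C1b" "grad (\<lambda>x. f x * g x) = (\<lambda>x. f x *\<^sub>R grad g x + g x *\<^sub>R grad f x)"
    using C1bI[OF b d cont c] by auto
qed

lemma C1b_comp:
  fixes f :: "'a::real_inner \<Rightarrow> real"
  assumes "f \<in> C1b" "\<And>t. (\<theta> has_real_derivative \<theta>' t) (at t)" "continuous_on UNIV \<theta>'"
    "\<And>t. \<bar>\<theta> t\<bar> \<le> B" "\<And>t. \<bar>\<theta>' t\<bar> \<le> B'"
  shows "(\<lambda>x. \<theta> (f x)) \<in> C1b" "grad (\<lambda>x. \<theta> (f x)) = (\<lambda>x. \<theta>' (f x) *\<^sub>R grad f x)"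
proof -
  obtain C where C: "\<And>x. norm (grad f x) \<le> C" using C1bD(4)[OF assms(1)] by blast
  have d: "((\<lambda>x. \<theta> (f x)) has_derivative (\<lambda>h. (\<theta>' (f x) *\<^sub>R grad f x) \<bullet> h)) (at x)" for x
    using has_derivative_compose[OF C1bD(2)[OF assms(1)] assms(2)[unfolded has_field_derivative_def], of x]
    by (simp add: algebra_simps)
  have c: "norm (\<theta>' (f x) *\<^sub>R grad f x) \<le> B' * C" for x
    by simp (meson C assms(5) abs_ge_zero mult_mono norm_ge_zero order_trans)
  have cont: "continuous_on UNIV (\<lambda>x. \<theta>' (f x) *\<^sub>R grad f x)"
    by (intro continuous_intros C1bD[OF assms(1)] continuous_on_compose2[OF assms(3)]) auto
  show "(\<lambda>x. \<theta> (f x)) \<in> C1b" "grad (\<lambda>x. \<theta> (f x)) = (\<lambda>x. \<theta>' (f x) *\<^sub>R grad f x)"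
    using C1bI[OF assms(4) d cont c] by auto
qed


lemma C1b_q: "(\<lambda>x::'a::real_inner. 1 / (1 + (x - a) \<bullet> (x - a))) \<in> C1b"
proof -
  let ?G = "\<lambda>x. (- 2 / (1 + (x - a) \<bullet> (x - a))^2) *\<^sub>R (x - a)"
  have pos: "1 + (x - a) \<bullet> (x - a) > 0" for x :: 'a
    by (simp add: add_pos_nonneg)
  have d: "((\<lambda>x. 1 / (1 + (x - a) \<bullet> (x - a))) has_derivative (\<lambda>h. ?G x \<bullet> h)) (at x)" for x
  proof -
    define D where "D = 1 + (x - a) \<bullet> (x - a)"
    have "((\<lambda>x. 1 / (1 + (x - a) \<bullet> (x - a))) has_derivative
      (\<lambda>h. (- ((x - a) \<bullet> h) - h \<bullet> (x - a)) / (D * D))) (at x)"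
      using pos[of x] unfolding D_def by (auto intro!: derivative_eq_intros)
    moreover have "(\<lambda>h. (- ((x - a) \<bullet> h) - h \<bullet> (x - a)) / (D * D)) = (\<lambda>h. ?G x \<bullet> h)"
      unfolding D_def[symmetric] by (intro ext) (simp add: inner_commute power2_eq_square)
    ultimately show ?thesis by simp
  qed
  have b: "\<bar>1 / (1 + (x - a) \<bullet> (x - a))\<bar> \<le> 1" for x
    using pos[of x] by simp
  have c: "norm (?G x) \<le> 2" for x
  proof -
    define s where "s = norm (x - a)"
    have ss: "(x - a) \<bullet> (x - a) = s^2" by (simp add: s_def power2_norm_eq_inner)
    have s0: "s \<ge> 0" by (simp add: s_def)
    have "(s - 1)^2 \<ge> 0" by simp
    then have h1: "s \<le> 1 + s^2" using s0 by (simp add: power2_diff)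
    have t1: "1 \<le> 1 + s^2" by simp
    have "1 * (1 + s^2) \<le> (1 + s^2) * (1 + s^2)" by (rule mult_right_mono[OF t1]) simp
    then have h2: "1 + s^2 \<le> (1 + s^2)^2" by (simp add: power2_eq_square)
    have "s \<le> (1 + s^2)^2" using h1 h2 by linarith
    then have "2 * s / (1 + s^2)^2 \<le> 2" by (simp add: divide_le_eq add_pos_nonneg)
    moreover have "norm (?G x) = 2 * s / (1 + s^2)^2" unfolding ss
      by (simp add: s_def[symmetric] abs_of_nonneg s0 add_pos_nonneg)
    ultimately show ?thesis by simp
  qed
  have cont: "continuous_on UNIV ?G"
    by (intro continuous_intros) (metis pos less_irrefl power_not_zero)
  show ?thesis using C1bI(1)[OF b d cont c] .
qed

definition theta :: "real \<Rightarrow> nat \<Rightarrow> real \<Rightarrow> real" where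
  "theta c k s = 1/2 + arctan (real k ^ 2 * (s - c) - real k) / pi"

lemma theta_bound: "\<bar>theta c k s\<bar> \<le> 1"
proof -
  define A where "A = arctan (real k ^ 2 * (s - c) - real k)"
  have a1: "A < pi/2" "- (pi/2) < A" using arctan_bounded unfolding A_def by auto
  have "A/pi < 1/2" using a1(1) pi_gt_zero by (simp add: divide_less_eq)
  moreover have "-1/2 < A/pi" using a1(2) pi_gt_zero by (simp add: less_divide_eq)
  ultimately show ?thesis unfolding theta_def A_def[symmetric] by linarith
qed

lemma C1b_theta:
  assumes "f \<in> C1b"
  shows "(\<lambda>x. theta c k (f x)) \<in> C1b"
proof (rule C1b_comp(1)[OF assms, where \<theta>' = "\<lambda>s. real k ^ 2 / (pi * (1 + (real k ^ 2 * (s - c) - real k)^2))" and B=1 and B'="real k ^ 2 / pi"])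
  show "(theta c k has_real_derivative real k ^ 2 / (pi * (1 + (real k ^ 2 * (s - c) - real k)^2))) (at s)" for s
  proof -
    define X where "X = real k ^ 2 * (s - c) - real k"
    have "(theta c k has_real_derivative (1 / pi) * (inverse (1 + X^2) * (real k ^ 2 * 1))) (at s)"
      unfolding theta_def X_def by (auto intro!: derivative_eq_intros)
    moreover have "(1 / pi) * (inverse (1 + X^2) * (real k ^ 2 * 1)) = real k ^ 2 / (pi * (1 + X^2))"
      by (simp add: divide_inverse inverse_mult_distrib ac_simps)
    ultimately show ?thesis by (simp add: X_def)
  qed
  show "continuous_on UNIV (\<lambda>s. real k ^ 2 / (pi * (1 + (real k ^ 2 * (s - c) - real k)^2)))"
  proof (intro continuous_intros ballI)
    fix s :: real
    have "1 + (real k ^ 2 * (s - c) - real k)^2 > 0" by (simp add: add_pos_nonneg)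
    then show "pi * (1 + (real k ^ 2 * (s - c) - real k)^2) \<noteq> 0" using pi_gt_zero by simp
  qed
  show "\<bar>theta c k s\<bar> \<le> 1" for s by (rule theta_bound)
  show "\<bar>real k ^ 2 / (pi * (1 + (real k ^ 2 * (s - c) - real k)^2))\<bar> \<le> real k ^ 2 / pi" for s
  proof -
    have "1 \<le> 1 + (real k ^ 2 * (s - c) - real k)^2" by simp
    then have le: "pi \<le> pi * (1 + (real k ^ 2 * (s - c) - real k)^2)" using pi_gt_zero
      by (metis mult.right_neutral mult_left_mono less_imp_le)
    have "real k ^ 2 / (pi * (1 + (real k ^ 2 * (s - c) - real k)^2)) \<le> real k ^ 2 / pi"
      using le pi_gt_zero by (intro frac_le) auto
    moreover have "real k ^ 2 / (pi * (1 + (real k ^ 2 * (s - c) - real k)^2)) \<ge> 0"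
      using pi_gt_zero by (simp add: add_pos_nonneg less_imp_le)
    ultimately show ?thesis by simp
  qed
qed

lemma theta_lim:
  "(\<lambda>k. theta c k s) \<longlonglongrightarrow> (if s > c then 1 else 0)"
proof (cases "s > c")
  case True
  have "(\<lambda>k. arctan (real k ^ 2 * (s - c) - real k)) \<longlonglongrightarrow> pi/2"
    using filterlim_compose[OF tendsto_arctan_at_top lim_top[OF True]] .
  then have "(\<lambda>k. theta c k s) \<longlonglongrightarrow> 1/2 + (pi/2)/pi"
    unfolding theta_def by (intro tendsto_intros) auto
  then show ?thesis using True by simp
next
  case False
  have "(\<lambda>k. arctan (real k ^ 2 * (s - c) - real k)) \<longlonglongrightarrow> - (pi/2)"
    using filterlim_compose[OF tendsto_arctan_at_bot lim_bot] False by simp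
  then have "(\<lambda>k. theta c k s) \<longlonglongrightarrow> 1/2 + (- (pi/2))/pi"
    unfolding theta_def by (intro tendsto_intros) auto
  then show ?thesis using False by simp
qed

definition approx :: "('a::real_inner \<Rightarrow> real) \<Rightarrow> bool" where
  "approx f \<longleftrightarrow> (\<exists>u. (\<forall>k. u k \<in> C1b) \<and> (\<forall>k x. \<bar>u k x\<bar> \<le> 1) \<and> (\<forall>x. (\<lambda>k. u k x) \<longlonglongrightarrow> f x))"

lemma approx_one: "approx (\<lambda>x. 1)"
  unfolding approx_def by (rule exI[of _ "\<lambda>k x. 1"]) (auto simp: C1b_const)

lemma approx_mult: "approx f \<Longrightarrow> approx g \<Longrightarrow> approx (\<lambda>x. f x * g x)"
  unfolding approx_def
proof (elim exE conjE)
  fix u v assume u: "\<forall>k. u k \<in> C1b" "\<forall>k x. \<bar>u k x\<bar> \<le> 1" "\<forall>x. (\<lambda>k. u k x) \<longlonglongrightarrow> f x"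
    and v: "\<forall>k. v k \<in> C1b" "\<forall>k x. \<bar>v k x\<bar> \<le> 1" "\<forall>x. (\<lambda>k. v k x) \<longlonglongrightarrow> g x"
  show "\<exists>w. (\<forall>k. w k \<in> C1b) \<and> (\<forall>k x. \<bar>w k x\<bar> \<le> 1) \<and> (\<forall>x. (\<lambda>k. w k x) \<longlonglongrightarrow> f x * g x)"
  proof (intro exI[of _ "\<lambda>k x. u k x * v k x"] conjI allI)
    fix k show "(\<lambda>x. u k x * v k x) \<in> C1b" using C1b_mult u v by blast
  next
    fix k x show "\<bar>u k x * v k x\<bar> \<le> 1" using u(2) v(2)
      by (simp add: abs_mult) (metis abs_ge_zero mult_le_one)
  next
    fix x show "(\<lambda>k. u k x * v k x) \<longlonglongrightarrow> f x * g x" using u(3) v(3) by (intro tendsto_intros) auto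
  qed
qed

lemma approx_ball:
  fixes a :: "'a::real_inner"
  assumes "r > 0"
  shows "approx (indicator (ball a r))"
  unfolding approx_def
proof (intro exI[of _ "\<lambda>k x. theta (1 / (1 + r^2)) k (1 / (1 + (x - a) \<bullet> (x - a)))"] conjI allI)
  fix k show "(\<lambda>x. theta (1 / (1 + r^2)) k (1 / (1 + (x - a) \<bullet> (x - a)))) \<in> C1b"
    by (rule C1b_theta[OF C1b_q])
next
  fix k x show "\<bar>theta (1 / (1 + r^2)) k (1 / (1 + (x - a) \<bullet> (x - a)))\<bar> \<le> 1" by (rule theta_bound)
next
  fix x :: 'a
  have "(1 / (1 + (x - a) \<bullet> (x - a)) > 1 / (1 + r^2)) \<longleftrightarrow> (x - a) \<bullet> (x - a) < r^2"
  proof -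
    have p1: "1 + (x - a) \<bullet> (x - a) > 0" by (simp add: add_pos_nonneg)
    have p2: "1 + r^2 > 0" by (simp add: add_pos_nonneg)
    show ?thesis using inverse_less_iff_less[OF p2 p1] by (simp add: inverse_eq_divide)
  qed
  also have "\<dots> \<longleftrightarrow> norm (x - a) < r"
  proof -
    have e2: "(r^2 \<le> norm (x - a)^2) \<longleftrightarrow> r \<le> norm (x - a)" using assms by (intro power_mono_iff) auto
    have e3: "(x - a) \<bullet> (x - a) = norm (x - a)^2" by (simp add: power2_norm_eq_inner)
    show ?thesis unfolding e3 using e2 by (metis not_le)
  qed
  also have "\<dots> \<longleftrightarrow> x \<in> ball a r" by (simp add: dist_norm norm_minus_commute)
  finally have e: "(1 / (1 + (x - a) \<bullet> (x - a)) > 1 / (1 + r^2)) \<longleftrightarrow> x \<in> ball a r" .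
  show "(\<lambda>k. theta (1 / (1 + r^2)) k (1 / (1 + (x - a) \<bullet> (x - a)))) \<longlonglongrightarrow> indicator (ball a r) x"
    using theta_lim[of "1 / (1 + r^2)" "1 / (1 + (x - a) \<bullet> (x - a))"] unfolding e
    by (cases "x \<in> ball a r") (auto simp: indicator_def)
qed


definition Balls :: "'a::real_inner set set" where
  "Balls = {ball a r | a r. r > 0}"

definition Gen :: "'a::real_inner set set" where
  "Gen = {\<Inter>F | F. finite F \<and> F \<subseteq> Balls}"

lemma approx_Inter:
  assumes "finite F" "F \<subseteq> (Balls :: 'a::real_inner set set)"
  shows "approx (indicator (\<Inter>F) :: 'a \<Rightarrow> real)"
  using assms
proof (induction F rule: finite_induct)
  case empty
  then show ?case using approx_one by (simp add: indicator_def)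
next
  case (insert B F)
  then obtain a r where B: "B = ball a r" "r > 0" by (auto simp: Balls_def)
  have "approx (\<lambda>x. indicator B x * indicator (\<Inter>F) x :: real)"
    using approx_mult[OF approx_ball[OF B(2), of a] insert.IH] insert.prems B by auto
  then show ?case by (simp add: indicator_inter_arith[symmetric])
qed

lemma Gen_open: "A \<in> Gen \<Longrightarrow> open A"
  unfolding Gen_def Balls_def by (auto intro!: open_Inter)

lemma Gen_Int_stable: "Int_stable Gen"
  unfolding Int_stable_def Gen_def
proof (safe)
  fix F G :: "'a set set" assume "finite F" "F \<subseteq> Balls" "finite G" "G \<subseteq> Balls"
  then show "\<exists>H. \<Inter>F \<inter> \<Inter>G = \<Inter>H \<and> finite H \<and> H \<subseteq> Balls"
    by (intro exI[of _ "F \<union> G"]) auto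
qed

lemma Gen_UNIV: "UNIV \<in> Gen"
  unfolding Gen_def by (auto intro!: exI[of _ "{}"])

lemma ball_in_Gen: "r > 0 \<Longrightarrow> ball a r \<in> Gen"
  unfolding Gen_def Balls_def by (auto intro!: exI[of _ "{ball a r}"])

lemma open_Union_balls:
  fixes S :: "'a::{real_inner, second_countable_topology} set"
  assumes "open S"
  shows "S \<in> sigma_sets UNIV Gen"
proof -
  obtain D :: "'a set" where D: "countable D" "\<And>X. open X \<Longrightarrow> X \<noteq> {} \<Longrightarrow> \<exists>d\<in>D. d \<in> X"
    using countable_dense_setE by blast
  define I where "I = {(d, n). d \<in> D \<and> ball d (1 / real (Suc n)) \<subseteq> S}"
  define C where "C = (\<lambda>(d, n). ball d (1 / real (Suc n))) ` I"
  have cI: "countable I" unfolding I_def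
    by (rule countable_subset[of _ "D \<times> UNIV"]) (auto intro: countable_SIGMA D(1))
  have "countable C" unfolding C_def using cI by simp
  moreover have "C \<subseteq> sigma_sets UNIV Gen"
    unfolding C_def by (auto intro!: sigma_sets.Basic ball_in_Gen)
  moreover have "\<Union>C = S"
  proof
    show "\<Union>C \<subseteq> S" unfolding C_def I_def by auto
    show "S \<subseteq> \<Union>C"
    proof
      fix x assume "x \<in> S"
      then obtain e where e: "e > 0" "ball x e \<subseteq> S" using assms open_contains_ball by blast
      obtain n :: nat where n: "1 / real (Suc n) < e / 2"
        using reals_Archimedean[of "e/2"] e(1) by (auto simp: inverse_eq_divide)
      obtain d where d: "d \<in> D" "d \<in> ball x (1 / real (Suc n))"
        using D(2)[of "ball x (1 / real (Suc n))"] by auto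
      have "ball d (1 / real (Suc n)) \<subseteq> ball x e"
      proof
        fix y assume "y \<in> ball d (1 / real (Suc n))"
        then have "dist x y < 2 / real (Suc n)" using d(2) dist_triangle[of x y d]
          by (simp add: dist_commute)
        then show "y \<in> ball x e" using n by simp
      qed
      then have "(d, n) \<in> I" using d e unfolding I_def by auto
      moreover have "x \<in> ball d (1 / real (Suc n))" using d(2) by (simp add: dist_commute)
      ultimately show "x \<in> \<Union>C" unfolding C_def by (auto intro!: bexI[where x="(d,n)"])
    qed
  qed
  ultimately show ?thesis
    using sigma_algebra.countable_Union[OF sigma_algebra_sigma_sets[of Gen UNIV]] by auto
qed

lemma sigma_Gen: "sigma_sets UNIV (Gen :: 'a::{real_inner, second_countable_topology} set set) = sets borel"
proof
  show "sigma_sets UNIV Gen \<subseteq> sets borel"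
    unfolding sets_borel by (rule sigma_sets_mono) (auto intro: Gen_open)
  show "sets borel \<subseteq> sigma_sets UNIV (Gen :: 'a set set)"
    unfolding sets_borel
    by (rule sigma_algebra.sigma_sets_subset[OF sigma_algebra_sigma_sets]) (auto intro: open_Union_balls)
qed

lemma C1b_measurable:
  fixes f :: "'a::real_inner \<Rightarrow> real" and M :: "'a measure"
  assumes "sets M = sets borel" "f \<in> C1b"
  shows "f \<in> borel_measurable M"
proof -
  have "(borel_measurable M :: ('a \<Rightarrow> real) set) = borel_measurable (borel :: 'a measure)" by (rule measurable_cong_sets[OF assms(1) refl])
  then show ?thesis using borel_measurable_continuous_onI[OF C1bD(5)[OF assms(2)]] by simp
qed

lemma density_C1b:
  fixes g :: "'a::{real_inner, banach, second_countable_topology} \<Rightarrow> real"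
  assumes sets: "sets M = sets borel" and fin: "finite_measure M" and g: "integrable M g"
    and orth: "\<And>\<psi>. \<psi> \<in> C1b \<Longrightarrow> (\<integral>x. \<psi> x * g x \<partial>M) = 0"
  shows "AE x in M. g x = 0"
proof -
  have sp: "space M = UNIV" using sets_eq_imp_space_eq[OF sets] by simp
  have gm: "g \<in> borel_measurable M" using g by auto
  have basic0: "(\<integral>x. indicator A x * g x \<partial>M) = 0" if "A \<in> Gen" for A
  proof -
    obtain F where F: "A = \<Inter>F" "finite F" "F \<subseteq> Balls" using \<open>A \<in> Gen\<close> unfolding Gen_def by auto
    obtain u where u: "\<And>k. u k \<in> C1b" "\<And>k x. \<bar>u k x\<bar> \<le> 1" "\<And>x. (\<lambda>k. u k x) \<longlonglongrightarrow> indicator A x"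
      using approx_Inter[OF F(2,3)] unfolding approx_def F(1) by blast
    have "(\<lambda>k. \<integral>x. u k x * g x \<partial>M) \<longlonglongrightarrow> (\<integral>x. indicator A x * g x \<partial>M)"
    proof (rule integral_dominated_convergence[where w="\<lambda>x. norm (g x)"])
      show "(\<lambda>x. indicator A x * g x) \<in> borel_measurable M"
      proof -
        have "A \<in> sets M" using Gen_open[OF that] sets by simp
        then show ?thesis using gm by (intro borel_measurable_times) auto
      qed
      show "(\<lambda>x. u k x * g x) \<in> borel_measurable M" for k
        using C1b_measurable[OF sets u(1)] gm by simp
      show "integrable M (\<lambda>x. norm (g x))" using g by simp
      show "AE x in M. (\<lambda>k. u k x * g x) \<longlonglongrightarrow> indicator A x * g x"
        using u(3) by (intro AE_I2 tendsto_intros) auto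
      show "AE x in M. norm (u k x * g x) \<le> norm (g x)" for k
        using u(2) by (intro AE_I2) (simp add: abs_mult, metis abs_ge_zero mult_left_le_one_le)
    qed
    moreover have "(\<integral>x. u k x * g x \<partial>M) = 0" for k using orth[OF u(1)] .
    ultimately show ?thesis by (simp add: LIMSEQ_const_iff)
  qed
  have gsets: "sigma_sets UNIV Gen = sets M" using sigma_Gen sets by simp
  have subs: "Gen \<subseteq> Pow (UNIV :: 'a set)" by simp
  have P: "(LINT x:A|M. g x) = 0" if "A \<in> sigma_sets UNIV Gen" for A
    using Gen_Int_stable subs that
  proof (induction A rule: sigma_sets_induct_disjoint)
    case (basic A)
    then show ?case using basic0[OF basic.hyps] by (simp add: set_lebesgue_integral_def)
  next
    case empty
    then show ?case by (simp add: set_lebesgue_integral_def)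
  next
    case (compl A)
    have A: "A \<in> sets M" using compl.hyps gsets by simp
    have "(LINT x:(UNIV - A)|M. g x) = (\<integral>x. g x - indicator A x * g x \<partial>M)"
      unfolding set_lebesgue_integral_def by (intro Bochner_Integration.integral_cong) (auto simp: indicator_def)
    also have "\<dots> = (\<integral>x. g x \<partial>M) - (\<integral>x. indicator A x * g x \<partial>M)"
      using integrable_mult_indicator[OF A g] g by (intro Bochner_Integration.integral_diff) auto
    also have "(\<integral>x. g x \<partial>M) = 0" using basic0[OF Gen_UNIV] by simp
    also have "(\<integral>x. indicator A x * g x \<partial>M) = 0" using compl.IH by (simp add: set_lebesgue_integral_def)
    finally show ?case by simp
  next
    case (union A)
    have As: "A i \<in> sets M" for i using union.hyps(2) gsets by auto
    have "(LINT x:(\<Union>i. A i)|M. g x) = (\<Sum>i. LINT x:(A i)|M. g x)"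
    proof (rule lebesgue_integral_countable_add)
      show "A i \<in> sets M" for i by (rule As)
      show "A i \<inter> A j = {}" if "i \<noteq> j" for i j using union.hyps(1) that by (auto simp: disjoint_family_on_def)
      have "(\<Union>i. A i) \<in> sets M" using As by auto
      then show "set_integrable M (\<Union>i. A i) g"
        unfolding set_integrable_def by (rule integrable_mult_indicator[OF _ g])
    qed
    then show ?case using union.IH by simp
  qed
  have sfm: "sigma_finite_measure M" using fin unfolding finite_measure_def by simp
  show ?thesis
  proof (rule sigma_finite_measure.density_zero[OF sfm g])
    fix A assume "A \<in> sets M"
    then show "set_lebesgue_integral M A g = 0" using P gsets by simp
  qed
qed


lemma eps_bound:
  fixes t e p :: real
  assumes "e > 0" "t \<ge> 0" "p \<ge> 1"
  shows "t \<le> e + e powr (1 - p) * t powr p"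
proof (cases "t \<le> e")
  case True
  then show ?thesis by (smt (verit) mult_nonneg_nonneg powr_ge_zero)
next
  case False
  then have te: "t > e" by simp
  have tp: "t powr p = t * t powr (p - 1)"
    using powr_add[of t 1 "p - 1"] te assms by simp
  have "e powr (p - 1) \<le> t powr (p - 1)" using te assms by (intro powr_mono2) auto
  then have "t * e powr (p - 1) \<le> t powr p" unfolding tp using assms by (intro mult_left_mono) auto
  then have "e powr (1 - p) * (t * e powr (p - 1)) \<le> e powr (1 - p) * t powr p"
    by (intro mult_left_mono) auto
  moreover have "e powr (1 - p) * (t * e powr (p - 1)) = t"
  proof -
    have "e powr (1 - p) * e powr (p - 1) = 1"
      using powr_add[of e "1 - p" "p - 1", symmetric] assms by simp
    then show ?thesis by (simp add: ac_simps)
  qed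
  ultimately show ?thesis using assms by linarith
qed

lemma sum_powr_bound:
  fixes a b p :: real
  assumes "a \<ge> 0" "b \<ge> 0" "p \<ge> 0"
  shows "(a + b) powr p \<le> 2 powr p * (a powr p + b powr p)"
proof -
  have "(a + b) powr p \<le> (2 * max a b) powr p" using assms by (intro powr_mono2) auto
  also have "\<dots> = 2 powr p * max a b powr p" by (simp add: powr_mult)
  also have "max a b powr p \<le> a powr p + b powr p"
    by (cases "a \<le> b") (auto simp: max_def)
  then have "2 powr p * max a b powr p \<le> 2 powr p * (a powr p + b powr p)" by (intro mult_left_mono) auto
  finally show ?thesis .
qed

lemma integrable_from_powr:
  fixes h :: "'a \<Rightarrow> real"
  assumes "finite_measure M" "p \<ge> 1" "h \<in> borel_measurable M" "integrable M (\<lambda>x. \<bar>h x\<bar> powr p)"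
  shows "integrable M h"
proof (rule Bochner_Integration.integrable_bound[where f="\<lambda>x. 1 + \<bar>h x\<bar> powr p"])
  interpret finite_measure M by fact
  show "integrable M (\<lambda>x. 1 + \<bar>h x\<bar> powr p)" using assms(4) by (intro Bochner_Integration.integrable_add) auto
  show "h \<in> borel_measurable M" by fact
  show "AE x in M. norm (h x) \<le> norm (1 + \<bar>h x\<bar> powr p)"
    using eps_bound[of 1 "\<bar>h _\<bar>" p] assms(2) by (intro AE_I2) auto
qed

lemma L1_from_Lp:
  fixes h :: "nat \<Rightarrow> 'a \<Rightarrow> real"
  assumes "prob_space M" "p \<ge> 1" "\<And>n. h n \<in> borel_measurable M"
    "\<And>n. integrable M (\<lambda>x. \<bar>h n x\<bar> powr p)"
    "(\<lambda>n. \<integral>x. \<bar>h n x\<bar> powr p \<partial>M) \<longlonglongrightarrow> 0"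
  shows "\<And>n. integrable M (h n)" "(\<lambda>n. \<integral>x. \<bar>h n x\<bar> \<partial>M) \<longlonglongrightarrow> 0"
proof -
  interpret prob_space M by fact
  show int: "integrable M (h n)" for n
    using integrable_from_powr[OF finite_measure_axioms assms(2,3,4)] .
  show "(\<lambda>n. \<integral>x. \<bar>h n x\<bar> \<partial>M) \<longlonglongrightarrow> 0"
  proof (rule order_tendstoI)
    fix a :: real assume "a < 0"
    then show "\<forall>\<^sub>F n in sequentially. a < (\<integral>x. \<bar>h n x\<bar> \<partial>M)"
      by (intro always_eventually allI) (smt (verit) integral_nonneg_AE AE_I2 abs_ge_zero)
  next
    fix a :: real assume a: "0 < a"
    define e where "e = a / 2"
    have e: "e > 0" using a by (simp add: e_def)
    have "(\<lambda>n. e powr (1 - p) * (\<integral>x. \<bar>h n x\<bar> powr p \<partial>M)) \<longlonglongrightarrow> e powr (1 - p) * 0"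
      by (intro tendsto_intros assms(5))
    then have ev: "\<forall>\<^sub>F n in sequentially. e powr (1 - p) * (\<integral>x. \<bar>h n x\<bar> powr p \<partial>M) < e"
      using e by (intro order_tendstoD) auto
    show "\<forall>\<^sub>F n in sequentially. (\<integral>x. \<bar>h n x\<bar> \<partial>M) < a"
      using ev
    proof eventually_elim
      case (elim n)
      have "(\<integral>x. \<bar>h n x\<bar> \<partial>M) \<le> (\<integral>x. e + e powr (1 - p) * \<bar>h n x\<bar> powr p \<partial>M)"
        using int[of n] assms(4)[of n] e assms(2)
        by (intro integral_mono) (auto intro!: eps_bound)
      also have "\<dots> = e + e powr (1 - p) * (\<integral>x. \<bar>h n x\<bar> powr p \<partial>M)"
        using assms(4)[of n] by (simp add: prob_space)
      finally show ?case using elim e_def by linarith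
    qed
  qed
qed

lemma cont_meas:
  fixes f :: "'a::topological_space \<Rightarrow> 'b::topological_space" and M :: "'a measure"
  assumes "sets M = sets borel" "continuous_on UNIV f"
  shows "f \<in> borel_measurable M"
proof -
  have "(borel_measurable M :: ('a \<Rightarrow> 'b) set) = borel_measurable (borel :: 'a measure)"
    by (rule measurable_cong_sets[OF assms(1) refl])
  then show ?thesis using borel_measurable_continuous_onI[OF assms(2)] by simp
qed

lemma bounded_integrable:
  fixes f :: "'a \<Rightarrow> real"
  assumes "finite_measure M" "f \<in> borel_measurable M" "\<And>x. \<bar>f x\<bar> \<le> B"
  shows "integrable M f"
  using finite_measure.integrable_const_bound[OF assms(1), of f B] assms(2,3) by auto

lemma RT_props:
  fixes R :: "'a::real_inner \<Rightarrow> 'a"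
  assumes "bounded_linear R" "\<phi> \<in> C1b"
  shows "continuous_on UNIV (\<lambda>x. R (grad \<phi> x))" "\<exists>B. \<forall>x. norm (R (grad \<phi> x)) \<le> B"
proof -
  show "continuous_on UNIV (\<lambda>x. R (grad \<phi> x))"
    using bounded_linear.continuous_on[OF assms(1) C1bD(3)[OF assms(2)]] .
  obtain K where K: "\<And>x. norm (R x) \<le> norm x * K" "K > 0"
    using bounded_linear.pos_bounded[OF assms(1)] by blast
  obtain C where C: "\<And>x. norm (grad \<phi> x) \<le> C" using C1bD(4)[OF assms(2)] by blast
  show "\<exists>B. \<forall>x. norm (R (grad \<phi> x)) \<le> B"
    using K C by (intro exI[of _ "C * K"] allI) (meson K(2) less_imp_le mult_right_mono order_trans)
qed

lemma RTz_props:
  fixes R :: "'a::real_inner \<Rightarrow> 'a"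
  assumes "bounded_linear R" "\<phi> \<in> C1b"
  shows "continuous_on UNIV (\<lambda>x. R (grad \<phi> x) \<bullet> z)" "\<exists>B. \<forall>x. \<bar>R (grad \<phi> x) \<bullet> z\<bar> \<le> B"
proof -
  show "continuous_on UNIV (\<lambda>x. R (grad \<phi> x) \<bullet> z)"
    using RT_props(1)[OF assms] by (intro continuous_intros)
  obtain B where B: "\<And>x. norm (R (grad \<phi> x)) \<le> B" using RT_props(2)[OF assms] by blast
  show "\<exists>B. \<forall>x. \<bar>R (grad \<phi> x) \<bullet> z\<bar> \<le> B"
  proof (intro exI[of _ "B * norm z"] allI)
    fix x show "\<bar>R (grad \<phi> x) \<bullet> z\<bar> \<le> B * norm z"
      using Cauchy_Schwarz_ineq2[of "R (grad \<phi> x)" z] B[of x]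
      by (meson mult_right_mono norm_ge_zero order_trans)
  qed
qed


lemma C1b_arctan:
  assumes "f \<in> C1b"
  shows "(\<lambda>x. arctan (f x)) \<in> C1b" "grad (\<lambda>x. arctan (f x)) = (\<lambda>x. inverse (1 + (f x)^2) *\<^sub>R grad f x)"
proof -
  have d: "(arctan has_real_derivative inverse (1 + t^2)) (at t)" for t by (rule DERIV_arctan)
  have c: "continuous_on UNIV (\<lambda>t::real. inverse (1 + t^2))"
    by (intro continuous_intros) (metis add_pos_nonneg zero_le_power2 zero_less_one less_irrefl)
  have b1: "\<bar>arctan t\<bar> \<le> 2" for t
    using arctan_bounded[of t] pi_less_4 by (auto simp: abs_le_iff)
  have b2: "\<bar>inverse (1 + t^2)\<bar> \<le> 1" for t :: real
  proof -
    have "1 \<le> 1 + t^2" by simp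
    then show ?thesis by (simp add: abs_of_pos add_pos_nonneg inverse_le_1_iff)
  qed
  show "(\<lambda>x. arctan (f x)) \<in> C1b" "grad (\<lambda>x. arctan (f x)) = (\<lambda>x. inverse (1 + (f x)^2) *\<^sub>R grad f x)"
    using C1b_comp[OF assms d c b1 b2] by auto
qed


lemma mult2_bound:
  fixes a b A B :: real
  assumes "\<bar>a\<bar> \<le> A" "\<bar>b\<bar> \<le> B"
  shows "\<bar>a * b\<bar> \<le> A * B"
  unfolding abs_mult using assms by (intro mult_mono) (auto intro: order_trans[OF abs_ge_zero])

lemma mult3_bound:
  fixes a b c A B C :: real
  assumes "\<bar>a\<bar> \<le> A" "\<bar>b\<bar> \<le> B" "\<bar>c\<bar> \<le> C"
  shows "\<bar>a * b * c\<bar> \<le> A * B * C"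
  by (intro mult2_bound assms)

lemma scalar_closable:
  fixes \<nu> :: "'a::{real_inner, banach, second_countable_topology} measure"
    and R :: "'a \<Rightarrow> 'a" and v :: "'a \<Rightarrow> real"
  assumes P: "prob_space \<nu>" and S: "sets \<nu> = sets borel" and R: "bounded_linear R"
    and vm: "v \<in> borel_measurable \<nu>" and vi: "integrable \<nu> (\<lambda>x. \<bar>v x\<bar> powr 2)"
    and ibp: "\<forall>\<phi>\<in>C1b. (\<integral>x. R (grad \<phi> x) \<bullet> z \<partial>\<nu>) = (\<integral>x. v x * \<phi> x \<partial>\<nu>)"
    and p: "p \<ge> 1"
  shows "Lp_closable \<nu> p C1b (\<lambda>\<phi> x. R (grad \<phi> x) \<bullet> z)"
  unfolding Lp_closable_def
proof (intro allI impI, elim conjE)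
  fix \<phi> :: "nat \<Rightarrow> 'a \<Rightarrow> real" and g :: "'a \<Rightarrow> real"
  assume \<phi>C: "\<forall>n. \<phi> n \<in> C1b" and \<phi>L: "(\<lambda>n. \<integral>x. \<bar>\<phi> n x\<bar> powr p \<partial>\<nu>) \<longlonglongrightarrow> 0"
    and gm[measurable]: "g \<in> borel_measurable \<nu>"
    and gp: "integrable \<nu> (\<lambda>x. norm (g x) powr p)"
    and conv: "(\<lambda>n. \<integral>x. norm (R (grad (\<phi> n) x) \<bullet> z - g x) powr p \<partial>\<nu>) \<longlonglongrightarrow> 0"
  interpret prob_space \<nu> by (rule P)
  have fin: "finite_measure \<nu>" by (rule finite_measure_axioms)
  note vm[measurable]
  have vint: "integrable \<nu> v" using integrable_from_powr[OF fin _ vm vi] by simp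
  have gint: "integrable \<nu> g" using integrable_from_powr[OF fin p gm] gp by simp
  define T where "T n x = R (grad (\<phi> n) x) \<bullet> z" for n x
  have Tm[measurable]: "T n \<in> borel_measurable \<nu>" for n
    unfolding T_def using cont_meas[OF S RTz_props(1)[OF R \<phi>C[rule_format]]] .
  have \<phi>m[measurable]: "\<phi> n \<in> borel_measurable \<nu>" for n
    using cont_meas[OF S C1bD(5)[OF \<phi>C[rule_format]]] .
  have "\<forall>n. \<exists>B. \<forall>x. \<bar>T n x\<bar> \<le> B" unfolding T_def using RTz_props(2)[OF R \<phi>C[rule_format]] by blast
  then obtain TB where TB: "\<And>n x. \<bar>T n x\<bar> \<le> TB n" by metis
  have "\<forall>n. \<exists>B. \<forall>x. \<bar>\<phi> n x\<bar> \<le> B" using C1bD(1) \<phi>C by blast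
  then obtain PB where PB: "\<And>n x. \<bar>\<phi> n x\<bar> \<le> PB n" by metis
  have hint: "integrable \<nu> (\<lambda>x. \<bar>T n x - g x\<bar> powr p)" for n
  proof (rule Bochner_Integration.integrable_bound[where f="\<lambda>x. 2 powr p * (TB n powr p + \<bar>g x\<bar> powr p)"])
    show "integrable \<nu> (\<lambda>x. 2 powr p * (TB n powr p + \<bar>g x\<bar> powr p))"
      using gp by (intro Bochner_Integration.integrable_mult_right Bochner_Integration.integrable_add) auto
    show "(\<lambda>x. \<bar>T n x - g x\<bar> powr p) \<in> borel_measurable \<nu>" by measurable
    show "AE x in \<nu>. norm (\<bar>T n x - g x\<bar> powr p) \<le> norm (2 powr p * (TB n powr p + \<bar>g x\<bar> powr p))"
    proof (intro AE_I2)
      fix x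
      have tb0: "TB n \<ge> 0" using TB[of n x] by linarith
      have "\<bar>T n x - g x\<bar> powr p \<le> (TB n + \<bar>g x\<bar>) powr p"
        using TB[of n x] p by (intro powr_mono2) auto
      also have "\<dots> \<le> 2 powr p * (TB n powr p + \<bar>g x\<bar> powr p)"
        using tb0 p by (intro sum_powr_bound) auto
      finally show "norm (\<bar>T n x - g x\<bar> powr p) \<le> norm (2 powr p * (TB n powr p + \<bar>g x\<bar> powr p))"
        by simp
    qed
  qed
  have convT: "(\<lambda>n. \<integral>x. \<bar>T n x - g x\<bar> powr p \<partial>\<nu>) \<longlonglongrightarrow> 0"
    using conv unfolding T_def by simp
  have hL1: "(\<lambda>n. \<integral>x. \<bar>T n x - g x\<bar> \<partial>\<nu>) \<longlonglongrightarrow> 0"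
    using L1_from_Lp(2)[OF P p _ hint convT] by simp
  have \<phi>pint: "integrable \<nu> (\<lambda>x. \<bar>\<phi> n x\<bar> powr p)" for n
  proof (rule bounded_integrable[OF fin, where B="PB n powr p"])
    show "(\<lambda>x. \<bar>\<phi> n x\<bar> powr p) \<in> borel_measurable \<nu>" by measurable
    show "\<bar>\<bar>\<phi> n x\<bar> powr p\<bar> \<le> PB n powr p" for x
      using PB[of n x] p by (simp add: powr_mono2)
  qed
  have \<phi>int: "integrable \<nu> (\<phi> n)" for n using L1_from_Lp(1)[OF P p _ \<phi>pint \<phi>L] by simp
  have \<phi>L1: "(\<lambda>n. \<integral>x. \<bar>\<phi> n x\<bar> \<partial>\<nu>) \<longlonglongrightarrow> 0" using L1_from_Lp(2)[OF P p _ \<phi>pint \<phi>L] by simp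
  obtain r :: "nat \<Rightarrow> nat" where r: "strict_mono r" and rAE: "AE x in \<nu>. (\<lambda>n. \<phi> (r n) x) \<longlonglongrightarrow> 0"
    using tendsto_L1_AE_subseq[where u=\<phi> and M=\<nu>, OF \<phi>int] \<phi>L1 unfolding real_norm_def by blast
  have hL1r: "(\<lambda>n. \<integral>x. \<bar>T (r n) x - g x\<bar> \<partial>\<nu>) \<longlonglongrightarrow> 0"
    using LIMSEQ_subseq_LIMSEQ[OF hL1 r] by (simp add: o_def)
  have orth: "(\<integral>x. \<psi> x * g x \<partial>\<nu>) = 0" if \<psi>C: "\<psi> \<in> C1b" for \<psi>
  proof -
    obtain B\<psi> where B\<psi>: "\<And>x. \<bar>\<psi> x\<bar> \<le> B\<psi>" using C1bD(1)[OF \<psi>C] by blast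
    obtain C\<psi> where C\<psi>: "\<And>x. \<bar>R (grad \<psi> x) \<bullet> z\<bar> \<le> C\<psi>" using RTz_props(2)[OF R \<psi>C] by blast
    have \<psi>m[measurable]: "\<psi> \<in> borel_measurable \<nu>" using cont_meas[OF S C1bD(5)[OF \<psi>C]] .
    have T\<psi>m[measurable]: "(\<lambda>x. R (grad \<psi> x) \<bullet> z) \<in> borel_measurable \<nu>"
      using cont_meas[OF S RTz_props(1)[OF R \<psi>C]] .
    have B\<psi>0: "B\<psi> \<ge> 0" using B\<psi>[of undefined] by linarith
    have C\<psi>0: "C\<psi> \<ge> 0" using C\<psi>[of undefined] by linarith
    have atb: "\<bar>arctan t\<bar> \<le> 2" for t
      using arctan_bounded[of t] pi_less_4 by (auto simp: abs_le_iff)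
    have invb: "\<bar>inverse (1 + t^2)\<bar> \<le> 1" for t :: real
    proof -
      have "1 \<le> 1 + t^2" by simp
      then show ?thesis by (simp add: abs_of_pos add_pos_nonneg inverse_le_1_iff)
    qed
    have ident: "(\<integral>x. \<psi> x * inverse (1 + (\<phi> n x)^2) * T n x \<partial>\<nu>)
       = (\<integral>x. v x * (\<psi> x * arctan (\<phi> n x)) \<partial>\<nu>) - (\<integral>x. arctan (\<phi> n x) * (R (grad \<psi> x) \<bullet> z) \<partial>\<nu>)" for n
    proof -
      note A = C1b_arctan[OF \<phi>C[rule_format, of n]]
      note W = C1b_mult[OF \<psi>C A(1)]
      have gw: "R (grad (\<lambda>x. \<psi> x * arctan (\<phi> n x)) x) \<bullet> z
          = \<psi> x * inverse (1 + (\<phi> n x)^2) * T n x + arctan (\<phi> n x) * (R (grad \<psi> x) \<bullet> z)" for x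
        unfolding W(2) A(2) T_def
        by (simp add: linear_add[OF bounded_linear.linear[OF R]] linear_scale[OF bounded_linear.linear[OF R]] inner_add_left)
      have i1: "integrable \<nu> (\<lambda>x. \<psi> x * inverse (1 + (\<phi> n x)^2) * T n x)"
      proof (rule bounded_integrable[OF fin, where B="B\<psi> * 1 * TB n"])
        show "(\<lambda>x. \<psi> x * inverse (1 + (\<phi> n x)^2) * T n x) \<in> borel_measurable \<nu>" by measurable
        show "\<bar>\<psi> x * inverse (1 + (\<phi> n x)^2) * T n x\<bar> \<le> B\<psi> * 1 * TB n" for x
          by (intro mult3_bound B\<psi> invb TB)
      qed
      have i2: "integrable \<nu> (\<lambda>x. arctan (\<phi> n x) * (R (grad \<psi> x) \<bullet> z))"
      proof (rule bounded_integrable[OF fin, where B="2 * C\<psi>"])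
        show "(\<lambda>x. arctan (\<phi> n x) * (R (grad \<psi> x) \<bullet> z)) \<in> borel_measurable \<nu>" by measurable
        show "\<bar>arctan (\<phi> n x) * (R (grad \<psi> x) \<bullet> z)\<bar> \<le> 2 * C\<psi>" for x
          by (intro mult2_bound atb C\<psi>)
      qed
      have "(\<integral>x. v x * (\<psi> x * arctan (\<phi> n x)) \<partial>\<nu>) = (\<integral>x. R (grad (\<lambda>x. \<psi> x * arctan (\<phi> n x)) x) \<bullet> z \<partial>\<nu>)"
        using ibp W(1) by simp
      also have "\<dots> = (\<integral>x. \<psi> x * inverse (1 + (\<phi> n x)^2) * T n x + arctan (\<phi> n x) * (R (grad \<psi> x) \<bullet> z) \<partial>\<nu>)"
        unfolding gw ..
      also have "\<dots> = (\<integral>x. \<psi> x * inverse (1 + (\<phi> n x)^2) * T n x \<partial>\<nu>) + (\<integral>x. arctan (\<phi> n x) * (R (grad \<psi> x) \<bullet> z) \<partial>\<nu>)"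
        using i1 i2 by (rule Bochner_Integration.integral_add)
      finally show ?thesis by simp
    qed
    have lim1: "(\<lambda>n. \<integral>x. v x * (\<psi> x * arctan (\<phi> (r n) x)) \<partial>\<nu>) \<longlonglongrightarrow> (\<integral>x. 0 \<partial>\<nu>)"
    proof (rule integral_dominated_convergence[where w="\<lambda>x. \<bar>v x\<bar> * (B\<psi> * 2)"])
      show "integrable \<nu> (\<lambda>x. \<bar>v x\<bar> * (B\<psi> * 2))" using vint by auto
      show "AE x in \<nu>. (\<lambda>n. v x * (\<psi> x * arctan (\<phi> (r n) x))) \<longlonglongrightarrow> 0"
        using rAE
      proof eventually_elim
        case (elim x)
        have "(\<lambda>n. v x * (\<psi> x * arctan (\<phi> (r n) x))) \<longlonglongrightarrow> v x * (\<psi> x * arctan 0)"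
          by (intro tendsto_intros elim)
        then show ?case by simp
      qed
      show "AE x in \<nu>. norm (v x * (\<psi> x * arctan (\<phi> (r n) x))) \<le> \<bar>v x\<bar> * (B\<psi> * 2)" for n
      proof (intro AE_I2)
        fix x
        have "\<bar>v x * (\<psi> x * arctan (\<phi> (r n) x))\<bar> \<le> \<bar>v x\<bar> * (B\<psi> * 2)"
          by (intro mult2_bound order_refl B\<psi> atb)
        then show "norm (v x * (\<psi> x * arctan (\<phi> (r n) x))) \<le> \<bar>v x\<bar> * (B\<psi> * 2)" by simp
      qed
    qed simp_all
    have lim2: "(\<lambda>n. \<integral>x. arctan (\<phi> (r n) x) * (R (grad \<psi> x) \<bullet> z) \<partial>\<nu>) \<longlonglongrightarrow> (\<integral>x. 0 \<partial>\<nu>)"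
    proof (rule integral_dominated_convergence[where w="\<lambda>x. 2 * C\<psi>"])
      show "integrable \<nu> (\<lambda>x. 2 * C\<psi>)" by simp
      show "AE x in \<nu>. (\<lambda>n. arctan (\<phi> (r n) x) * (R (grad \<psi> x) \<bullet> z)) \<longlonglongrightarrow> 0"
        using rAE
      proof eventually_elim
        case (elim x)
        have "(\<lambda>n. arctan (\<phi> (r n) x) * (R (grad \<psi> x) \<bullet> z)) \<longlonglongrightarrow> arctan 0 * (R (grad \<psi> x) \<bullet> z)"
          by (intro tendsto_intros elim)
        then show ?case by simp
      qed
      show "AE x in \<nu>. norm (arctan (\<phi> (r n) x) * (R (grad \<psi> x) \<bullet> z)) \<le> 2 * C\<psi>" for n
        using mult2_bound[OF atb C\<psi>] by (intro AE_I2) simp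
    qed simp_all
    have lim3: "(\<lambda>n. \<integral>x. \<psi> x * (inverse (1 + (\<phi> (r n) x)^2) - 1) * g x \<partial>\<nu>) \<longlonglongrightarrow> (\<integral>x. 0 \<partial>\<nu>)"
    proof (rule integral_dominated_convergence[where w="\<lambda>x. B\<psi> * 2 * \<bar>g x\<bar>"])
      show "integrable \<nu> (\<lambda>x. B\<psi> * 2 * \<bar>g x\<bar>)" using gint by auto
      show "AE x in \<nu>. (\<lambda>n. \<psi> x * (inverse (1 + (\<phi> (r n) x)^2) - 1) * g x) \<longlonglongrightarrow> 0"
        using rAE
      proof eventually_elim
        case (elim x)
        have "(\<lambda>n. \<psi> x * (inverse (1 + (\<phi> (r n) x)^2) - 1) * g x) \<longlonglongrightarrow> \<psi> x * (inverse (1 + 0^2) - 1) * g x"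
          by (intro tendsto_intros elim) simp
        then show ?case by simp
      qed
      show "AE x in \<nu>. norm (\<psi> x * (inverse (1 + (\<phi> (r n) x)^2) - 1) * g x) \<le> B\<psi> * 2 * \<bar>g x\<bar>" for n
      proof (intro AE_I2)
        fix x
        have "\<bar>inverse (1 + (\<phi> (r n) x)^2) - 1\<bar> \<le> 2" using invb[of "\<phi> (r n) x"] by linarith
        then show "norm (\<psi> x * (inverse (1 + (\<phi> (r n) x)^2) - 1) * g x) \<le> B\<psi> * 2 * \<bar>g x\<bar>"
          using mult3_bound[OF B\<psi>[of x] _ order_refl] by simp
      qed
    qed simp_all
    have lim4: "(\<lambda>n. \<integral>x. \<psi> x * inverse (1 + (\<phi> (r n) x)^2) * (T (r n) x - g x) \<partial>\<nu>) \<longlonglongrightarrow> 0"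
    proof (rule Lim_null_comparison)
      show "(\<lambda>n. B\<psi> * (\<integral>x. \<bar>T (r n) x - g x\<bar> \<partial>\<nu>)) \<longlonglongrightarrow> 0"
        using tendsto_mult_right_zero[OF hL1r] .
      show "\<forall>\<^sub>F n in sequentially. norm (\<integral>x. \<psi> x * inverse (1 + (\<phi> (r n) x)^2) * (T (r n) x - g x) \<partial>\<nu>)
          \<le> B\<psi> * (\<integral>x. \<bar>T (r n) x - g x\<bar> \<partial>\<nu>)"
      proof (intro always_eventually allI)
        fix n
        have ti: "integrable \<nu> (\<lambda>x. T (r n) x - g x)"
          using gint bounded_integrable[OF fin Tm TB] by auto
        have "norm (\<integral>x. \<psi> x * inverse (1 + (\<phi> (r n) x)^2) * (T (r n) x - g x) \<partial>\<nu>)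
            \<le> (\<integral>x. norm (\<psi> x * inverse (1 + (\<phi> (r n) x)^2) * (T (r n) x - g x)) \<partial>\<nu>)"
          by (rule integral_norm_bound)
        also have "\<dots> \<le> (\<integral>x. B\<psi> * \<bar>T (r n) x - g x\<bar> \<partial>\<nu>)"
        proof (rule integral_mono)
          show "integrable \<nu> (\<lambda>x. B\<psi> * \<bar>T (r n) x - g x\<bar>)" using ti by auto
          show "integrable \<nu> (\<lambda>x. norm (\<psi> x * inverse (1 + (\<phi> (r n) x)^2) * (T (r n) x - g x)))"
          proof (rule Bochner_Integration.integrable_bound[where f="\<lambda>x. B\<psi> * \<bar>T (r n) x - g x\<bar>"])
            show "integrable \<nu> (\<lambda>x. B\<psi> * \<bar>T (r n) x - g x\<bar>)" using ti by auto
            show "(\<lambda>x. norm (\<psi> x * inverse (1 + (\<phi> (r n) x)^2) * (T (r n) x - g x))) \<in> borel_measurable \<nu>"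
              by measurable
            show "AE x in \<nu>. norm (norm (\<psi> x * inverse (1 + (\<phi> (r n) x)^2) * (T (r n) x - g x)))
                \<le> norm (B\<psi> * \<bar>T (r n) x - g x\<bar>)"
            proof (intro AE_I2)
              fix x
              have "\<bar>\<psi> x * inverse (1 + (\<phi> (r n) x)^2)\<bar> \<le> B\<psi> * 1"
                by (intro mult2_bound B\<psi> invb)
              then show "norm (norm (\<psi> x * inverse (1 + (\<phi> (r n) x)^2) * (T (r n) x - g x)))
                \<le> norm (B\<psi> * \<bar>T (r n) x - g x\<bar>)"
                using B\<psi>0 by (simp add: abs_mult mult_right_mono)
            qed
          qed
          show "norm (\<psi> x * inverse (1 + (\<phi> (r n) x)^2) * (T (r n) x - g x)) \<le> B\<psi> * \<bar>T (r n) x - g x\<bar>" for x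
          proof -
            have "\<bar>\<psi> x * inverse (1 + (\<phi> (r n) x)^2)\<bar> \<le> B\<psi> * 1"
              by (intro mult2_bound B\<psi> invb)
            then show ?thesis by (simp add: abs_mult mult_right_mono)
          qed
        qed
        also have "\<dots> = B\<psi> * (\<integral>x. \<bar>T (r n) x - g x\<bar> \<partial>\<nu>)" by simp
        finally show "norm (\<integral>x. \<psi> x * inverse (1 + (\<phi> (r n) x)^2) * (T (r n) x - g x) \<partial>\<nu>)
          \<le> B\<psi> * (\<integral>x. \<bar>T (r n) x - g x\<bar> \<partial>\<nu>)" .
      qed
    qed
    have decomp: "(\<integral>x. \<psi> x * inverse (1 + (\<phi> (r n) x)^2) * T (r n) x \<partial>\<nu>)
      = (\<integral>x. \<psi> x * g x \<partial>\<nu>) + (\<integral>x. \<psi> x * inverse (1 + (\<phi> (r n) x)^2) * (T (r n) x - g x) \<partial>\<nu>)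
        + (\<integral>x. \<psi> x * (inverse (1 + (\<phi> (r n) x)^2) - 1) * g x \<partial>\<nu>)" for n
    proof -
      have ti: "integrable \<nu> (\<lambda>x. T (r n) x - g x)"
        using gint bounded_integrable[OF fin Tm TB] by auto
      have j1: "integrable \<nu> (\<lambda>x. \<psi> x * g x)"
      proof (rule Bochner_Integration.integrable_bound[OF integrable_mult_right[OF integrable_abs[OF gint], of B\<psi>]])
        show "(\<lambda>x. \<psi> x * g x) \<in> borel_measurable \<nu>" by measurable
        show "AE x in \<nu>. norm (\<psi> x * g x) \<le> norm (B\<psi> * \<bar>g x\<bar>)"
        proof (intro AE_I2)
          fix x
          have "\<bar>\<psi> x * g x\<bar> \<le> B\<psi> * \<bar>g x\<bar>" by (intro mult2_bound B\<psi>) simp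
          then show "norm (\<psi> x * g x) \<le> norm (B\<psi> * \<bar>g x\<bar>)" using B\<psi>0 by (simp add: abs_mult)
        qed
      qed
      have j2: "integrable \<nu> (\<lambda>x. \<psi> x * inverse (1 + (\<phi> (r n) x)^2) * (T (r n) x - g x))"
      proof (rule Bochner_Integration.integrable_bound[OF integrable_mult_right[OF integrable_abs[OF ti], of B\<psi>]])
        show "(\<lambda>x. \<psi> x * inverse (1 + (\<phi> (r n) x)^2) * (T (r n) x - g x)) \<in> borel_measurable \<nu>" by measurable
        show "AE x in \<nu>. norm (\<psi> x * inverse (1 + (\<phi> (r n) x)^2) * (T (r n) x - g x)) \<le> norm (B\<psi> * \<bar>T (r n) x - g x\<bar>)"
        proof (intro AE_I2)
          fix x
          have "\<bar>\<psi> x * inverse (1 + (\<phi> (r n) x)^2)\<bar> \<le> B\<psi> * 1"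
            by (intro mult2_bound B\<psi> invb)
          then show "norm (\<psi> x * inverse (1 + (\<phi> (r n) x)^2) * (T (r n) x - g x)) \<le> norm (B\<psi> * \<bar>T (r n) x - g x\<bar>)"
            using B\<psi>0 by (simp add: abs_mult mult_right_mono)
        qed
      qed
      have j3: "integrable \<nu> (\<lambda>x. \<psi> x * (inverse (1 + (\<phi> (r n) x)^2) - 1) * g x)"
      proof (rule Bochner_Integration.integrable_bound[OF integrable_mult_right[OF integrable_abs[OF gint], of "B\<psi> * 2"]])
        show "(\<lambda>x. \<psi> x * (inverse (1 + (\<phi> (r n) x)^2) - 1) * g x) \<in> borel_measurable \<nu>" by measurable
        show "AE x in \<nu>. norm (\<psi> x * (inverse (1 + (\<phi> (r n) x)^2) - 1) * g x) \<le> norm (B\<psi> * 2 * \<bar>g x\<bar>)"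
        proof (intro AE_I2)
          fix x
          have "\<bar>inverse (1 + (\<phi> (r n) x)^2) - 1\<bar> \<le> 2" using invb[of "\<phi> (r n) x"] by linarith
          then have "\<bar>\<psi> x * (inverse (1 + (\<phi> (r n) x)^2) - 1)\<bar> \<le> B\<psi> * 2"
            by (intro mult2_bound B\<psi>)
          then show "norm (\<psi> x * (inverse (1 + (\<phi> (r n) x)^2) - 1) * g x) \<le> norm (B\<psi> * 2 * \<bar>g x\<bar>)"
            using B\<psi>0 by (simp add: abs_mult mult_right_mono)
        qed
      qed
      have "(\<integral>x. \<psi> x * inverse (1 + (\<phi> (r n) x)^2) * T (r n) x \<partial>\<nu>)
        = (\<integral>x. (\<psi> x * g x + \<psi> x * inverse (1 + (\<phi> (r n) x)^2) * (T (r n) x - g x))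
              + \<psi> x * (inverse (1 + (\<phi> (r n) x)^2) - 1) * g x \<partial>\<nu>)"
        by (intro Bochner_Integration.integral_cong) (auto simp: algebra_simps)
      also have "\<dots> = (\<integral>x. \<psi> x * g x + \<psi> x * inverse (1 + (\<phi> (r n) x)^2) * (T (r n) x - g x) \<partial>\<nu>)
              + (\<integral>x. \<psi> x * (inverse (1 + (\<phi> (r n) x)^2) - 1) * g x \<partial>\<nu>)"
        using j1 j2 j3 by (intro Bochner_Integration.integral_add Bochner_Integration.integrable_add)
      also have "(\<integral>x. \<psi> x * g x + \<psi> x * inverse (1 + (\<phi> (r n) x)^2) * (T (r n) x - g x) \<partial>\<nu>)
          = (\<integral>x. \<psi> x * g x \<partial>\<nu>) + (\<integral>x. \<psi> x * inverse (1 + (\<phi> (r n) x)^2) * (T (r n) x - g x) \<partial>\<nu>)"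
        using j1 j2 by (rule Bochner_Integration.integral_add)
      finally show ?thesis .
    qed
    have "(\<lambda>n. (\<integral>x. \<psi> x * g x \<partial>\<nu>) + (\<integral>x. \<psi> x * inverse (1 + (\<phi> (r n) x)^2) * (T (r n) x - g x) \<partial>\<nu>)
        + (\<integral>x. \<psi> x * (inverse (1 + (\<phi> (r n) x)^2) - 1) * g x \<partial>\<nu>)) \<longlonglongrightarrow> (\<integral>x. \<psi> x * g x \<partial>\<nu>) + 0 + 0"
      using lim3 lim4 by (intro tendsto_intros) auto
    then have L: "(\<lambda>n. \<integral>x. \<psi> x * inverse (1 + (\<phi> (r n) x)^2) * T (r n) x \<partial>\<nu>) \<longlonglongrightarrow> (\<integral>x. \<psi> x * g x \<partial>\<nu>)"
      unfolding decomp by simp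
    have "(\<lambda>n. \<integral>x. \<psi> x * inverse (1 + (\<phi> (r n) x)^2) * T (r n) x \<partial>\<nu>) \<longlonglongrightarrow> 0 - 0"
      unfolding ident using lim1 lim2 by (intro tendsto_intros) auto
    with L show ?thesis using LIMSEQ_unique by fastforce
  qed
  show "AE x in \<nu>. g x = 0"
    by (rule density_C1b[OF S fin gint orth])
qed


theorem proposition2p3:
  fixes \<nu> :: "'a::{real_inner, banach, second_countable_topology} measure"
    and R :: "'a \<Rightarrow> 'a"
  assumes "prob_space \<nu>"
    and "sets \<nu> = sets borel"
    and "bounded_linear R"
    and "\<forall>z. \<exists>v. v \<in> borel_measurable \<nu>
                 \<and> (\<forall>q>1. integrable \<nu> (\<lambda>x. \<bar>v x\<bar> powr q))
                 \<and> (\<forall>\<phi>\<in>C1b. (\<integral>x. R (grad \<phi> x) \<bullet> z \<partial>\<nu>) = (\<integral>x. v x * \<phi> x \<partial>\<nu>))"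
    and "p \<ge> 1"
  shows "(\<forall>z. Lp_closable \<nu> p C1b (\<lambda>\<phi> x. R (grad \<phi> x) \<bullet> z))
         \<and> Lp_closable \<nu> p C1b (\<lambda>\<phi> x. R (grad \<phi> x))"
proof -
  note P = assms(1) and S = assms(2) and R = assms(3) and p = assms(5)
  interpret prob_space \<nu> by (rule P)
  have fin: "finite_measure \<nu>" by (rule finite_measure_axioms)
  have scal: "Lp_closable \<nu> p C1b (\<lambda>\<phi> x. R (grad \<phi> x) \<bullet> z)" for z
  proof -
    obtain v where v: "v \<in> borel_measurable \<nu>" "\<forall>q>1. integrable \<nu> (\<lambda>x. \<bar>v x\<bar> powr q)"
      "\<forall>\<phi>\<in>C1b. (\<integral>x. R (grad \<phi> x) \<bullet> z \<partial>\<nu>) = (\<integral>x. v x * \<phi> x \<partial>\<nu>)"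
      using assms(4) by blast
    have vi: "integrable \<nu> (\<lambda>x. \<bar>v x\<bar> powr 2)" using v(2)[rule_format, of 2] by linarith
    show ?thesis by (rule scalar_closable[OF P S R v(1) vi v(3) p])
  qed
  have vec: "Lp_closable \<nu> p C1b (\<lambda>\<phi> x. R (grad \<phi> x))"
    unfolding Lp_closable_def
  proof (intro allI impI, elim conjE)
    fix \<phi> :: "nat \<Rightarrow> 'a \<Rightarrow> real" and g :: "'a \<Rightarrow> 'a"
    assume \<phi>C: "\<forall>n. \<phi> n \<in> C1b" and \<phi>L: "(\<lambda>n. \<integral>x. \<bar>\<phi> n x\<bar> powr p \<partial>\<nu>) \<longlonglongrightarrow> 0"
      and gm[measurable]: "g \<in> borel_measurable \<nu>"
      and gp: "integrable \<nu> (\<lambda>x. norm (g x) powr p)"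
      and conv: "(\<lambda>n. \<integral>x. norm (R (grad (\<phi> n) x) - g x) powr p \<partial>\<nu>) \<longlonglongrightarrow> 0"
    define T where "T n x = R (grad (\<phi> n) x)" for n x
    have Tm[measurable]: "T n \<in> borel_measurable \<nu>" for n
      unfolding T_def using cont_meas[OF S RT_props(1)[OF R \<phi>C[rule_format]]] .
    have "\<forall>n. \<exists>B. \<forall>x. norm (T n x) \<le> B" unfolding T_def using RT_props(2)[OF R \<phi>C[rule_format]] by blast
    then obtain TB where TB: "\<And>n x. norm (T n x) \<le> TB n" by metis
    have hint: "integrable \<nu> (\<lambda>x. norm (T n x - g x) powr p)" for n
    proof (rule Bochner_Integration.integrable_bound[where f="\<lambda>x. 2 powr p * (TB n powr p + norm (g x) powr p)"])
      show "integrable \<nu> (\<lambda>x. 2 powr p * (TB n powr p + norm (g x) powr p))"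
        using gp by (intro Bochner_Integration.integrable_mult_right Bochner_Integration.integrable_add) auto
      show "(\<lambda>x. norm (T n x - g x) powr p) \<in> borel_measurable \<nu>" by measurable
      show "AE x in \<nu>. norm (norm (T n x - g x) powr p) \<le> norm (2 powr p * (TB n powr p + norm (g x) powr p))"
      proof (intro AE_I2)
        fix x
        have tb0: "TB n \<ge> 0" using TB[of n x] norm_ge_zero[of "T n x"] by linarith
        have "norm (T n x - g x) \<le> TB n + norm (g x)"
          using TB[of n x] norm_triangle_ineq4[of "T n x" "g x"] by linarith
        then have "norm (T n x - g x) powr p \<le> (TB n + norm (g x)) powr p"
          using p by (intro powr_mono2) auto
        also have "\<dots> \<le> 2 powr p * (TB n powr p + norm (g x) powr p)"
          using tb0 p by (intro sum_powr_bound) auto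
        finally show "norm (norm (T n x - g x) powr p) \<le> norm (2 powr p * (TB n powr p + norm (g x) powr p))"
          by simp
      qed
    qed
    have comp: "AE x in \<nu>. g x \<bullet> z = 0" for z
    proof -
      have gzm[measurable]: "(\<lambda>x. g x \<bullet> z) \<in> borel_measurable \<nu>" by measurable
      have gzp: "integrable \<nu> (\<lambda>x. norm (g x \<bullet> z) powr p)"
      proof (rule Bochner_Integration.integrable_bound[where f="\<lambda>x. norm z powr p * norm (g x) powr p"])
        show "integrable \<nu> (\<lambda>x. norm z powr p * norm (g x) powr p)" using gp by auto
        show "(\<lambda>x. norm (g x \<bullet> z) powr p) \<in> borel_measurable \<nu>" by measurable
        show "AE x in \<nu>. norm (norm (g x \<bullet> z) powr p) \<le> norm (norm z powr p * norm (g x) powr p)"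
        proof (intro AE_I2)
          fix x
          have "norm (g x \<bullet> z) powr p \<le> (norm (g x) * norm z) powr p"
            using p Cauchy_Schwarz_ineq2[of "g x" z] by (intro powr_mono2) auto
          also have "\<dots> = norm z powr p * norm (g x) powr p" by (simp add: powr_mult)
          finally show "norm (norm (g x \<bullet> z) powr p) \<le> norm (norm z powr p * norm (g x) powr p)"
            by simp
        qed
      qed
      have bnd: "(\<integral>x. norm (R (grad (\<phi> n) x) \<bullet> z - g x \<bullet> z) powr p \<partial>\<nu>)
          \<le> norm z powr p * (\<integral>x. norm (R (grad (\<phi> n) x) - g x) powr p \<partial>\<nu>)" for n
      proof -
        have pt: "norm (R (grad (\<phi> n) x) \<bullet> z - g x \<bullet> z) powr p \<le> norm z powr p * norm (R (grad (\<phi> n) x) - g x) powr p" for x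
        proof -
          have "norm (R (grad (\<phi> n) x) \<bullet> z - g x \<bullet> z) = \<bar>(R (grad (\<phi> n) x) - g x) \<bullet> z\<bar>"
            by (simp add: inner_diff_left)
          also have "\<dots> \<le> norm (R (grad (\<phi> n) x) - g x) * norm z" by (rule Cauchy_Schwarz_ineq2)
          finally have "norm (R (grad (\<phi> n) x) \<bullet> z - g x \<bullet> z) powr p \<le> (norm (R (grad (\<phi> n) x) - g x) * norm z) powr p"
            using p by (intro powr_mono2) auto
          then show ?thesis by (simp add: powr_mult mult.commute)
        qed
        have i2: "integrable \<nu> (\<lambda>x. norm z powr p * norm (R (grad (\<phi> n) x) - g x) powr p)"
          using hint[of n] unfolding T_def by auto
        have i1: "integrable \<nu> (\<lambda>x. norm (R (grad (\<phi> n) x) \<bullet> z - g x \<bullet> z) powr p)"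
        proof (rule Bochner_Integration.integrable_bound[OF i2])
          show "(\<lambda>x. norm (R (grad (\<phi> n) x) \<bullet> z - g x \<bullet> z) powr p) \<in> borel_measurable \<nu>"
            using Tm[of n] unfolding T_def by measurable
          show "AE x in \<nu>. norm (norm (R (grad (\<phi> n) x) \<bullet> z - g x \<bullet> z) powr p)
              \<le> norm (norm z powr p * norm (R (grad (\<phi> n) x) - g x) powr p)"
            using pt by (intro AE_I2) (simp add: abs_of_nonneg)
        qed
        have "(\<integral>x. norm (R (grad (\<phi> n) x) \<bullet> z - g x \<bullet> z) powr p \<partial>\<nu>)
            \<le> (\<integral>x. norm z powr p * norm (R (grad (\<phi> n) x) - g x) powr p \<partial>\<nu>)"
          using i1 i2 pt by (rule integral_mono)
        then show ?thesis by simp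
      qed
      have lim: "(\<lambda>n. \<integral>x. norm (R (grad (\<phi> n) x) \<bullet> z - g x \<bullet> z) powr p \<partial>\<nu>) \<longlonglongrightarrow> 0"
      proof (rule tendsto_sandwich[where f="\<lambda>n. 0" and h="\<lambda>n. norm z powr p * (\<integral>x. norm (R (grad (\<phi> n) x) - g x) powr p \<partial>\<nu>)"])
        show "\<forall>\<^sub>F n in sequentially. 0 \<le> (\<integral>x. norm (R (grad (\<phi> n) x) \<bullet> z - g x \<bullet> z) powr p \<partial>\<nu>)"
          by (intro always_eventually allI integral_nonneg_AE AE_I2) simp
        show "\<forall>\<^sub>F n in sequentially. (\<integral>x. norm (R (grad (\<phi> n) x) \<bullet> z - g x \<bullet> z) powr p \<partial>\<nu>)
            \<le> norm z powr p * (\<integral>x. norm (R (grad (\<phi> n) x) - g x) powr p \<partial>\<nu>)"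
          using bnd by (intro always_eventually allI)
        show "(\<lambda>n. norm z powr p * (\<integral>x. norm (R (grad (\<phi> n) x) - g x) powr p \<partial>\<nu>)) \<longlonglongrightarrow> 0"
          using tendsto_mult_right_zero[OF conv] .
      qed simp
      show ?thesis
        using scal[of z, unfolded Lp_closable_def, rule_format, of \<phi> "\<lambda>x. g x \<bullet> z"]
          \<phi>C \<phi>L gzm gzp lim by blast
    qed
    obtain D :: "'a set" where D: "countable D" "\<And>X. open X \<Longrightarrow> X \<noteq> {} \<Longrightarrow> \<exists>d\<in>D. d \<in> X"
      using countable_dense_setE by blast
    have "AE x in \<nu>. \<forall>z\<in>D. g x \<bullet> z = 0"
      using comp D(1) by (simp add: AE_ball_countable)
    then show "AE x in \<nu>. g x = 0"
    proof eventually_elim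
      case (elim x)
      show ?case
      proof (rule ccontr)
        assume ne: "g x \<noteq> 0"
        define e where "e = norm (g x) / 2"
        have e: "e > 0" using ne by (simp add: e_def)
        obtain d where d: "d \<in> D" "d \<in> ball (g x) e" using D(2)[of "ball (g x) e"] e by auto
        have "norm (g x) ^ 2 = g x \<bullet> g x" by (simp add: power2_norm_eq_inner)
        also have "\<dots> = g x \<bullet> (g x - d)" using elim d(1) by (simp add: inner_diff_right)
        also have "\<dots> \<le> norm (g x) * norm (g x - d)" by (rule real_inner_class.Cauchy_Schwarz_ineq2[THEN order_trans[OF abs_ge_self]])
        also have "\<dots> \<le> norm (g x) * e"
          using d(2) by (intro mult_left_mono) (auto simp: dist_norm)
        finally have "norm (g x) ^ 2 \<le> norm (g x) * (norm (g x) / 2)" unfolding e_def .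
        then show False using ne by (simp add: power2_eq_square)
      qed
    qed
  qed
  show ?thesis using scal vec by blast
qed

end
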